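(* Let $u=a_1\cdots a_n$ be the input of the following algorithm and let $P_i$ be the set of positions it computes for position $i$. Algorithm: for all $a\in A$ set $n_a\gets 1$, $Q_a\gets\emptyset$; for $i=1,\ldots,n$ with $a_i=c$: set $x_i\gets n_c$, $P_i\gets Q_c$; then $n_c\gets n_c+1$, $Q_c\gets\{i\}$; then for all $a\in A$: if $n_c<n_a$ set $n_a\gets n_c$, $Q_a\gets Q_c$, else if $n_c=n_a$ set $Q_a\gets Q_a\cup Q_c$. Then, if $i$ is a $c$-position, $R^u_i = \bigcup_{j \in P_i} R^u_j \, \mathsf{X}_c$, with the convention $\bigcup_{j\in\emptyset} R^u_j\,\mathsf{X}_c=\{\mathsf{X}_c\}$.
   Context: $A$ is a finite alphabet. An $\mathsf{X}$-ranker is a nonempty word over $\{\mathsf{X}_a : a\in A\}$, evaluated on a word $w$ by: $\mathsf{X}_a(w)$ is the smallest $a$-position of $w$ and $r\mathsf{X}_a(w)$ is the smallest $a$-position greater than $r(w)$ (possibly undefined). For a position $i$ of $u$, $x_i$ is the length of a shortest $\mathsf{X}$-ranker reaching $i$, and $R^u_i$ is the set of $\mathsf{X}$-rankers $r$ with $r(u)=i$ and $|r|=x_i$. *)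

theory Defs
  imports Main
begin

(* Words are lists; positions are 1-based: position j of w (1 <= j <= length w) carries w!(j-1).
   An X-ranker X_{b1}...X_{bk} is represented by the nonempty list [b1,...,bk]. *)

definition next_pos :: "'a list \<Rightarrow> 'a \<Rightarrow> nat \<Rightarrow> nat option" where
  "next_pos w a k =
     (if \<exists>j. k < j \<and> j \<le> length w \<and> w ! (j - 1) = a
      then Some (LEAST j. k < j \<and> j \<le> length w \<and> w ! (j - 1) = a)
      else None)"

(* evaluation r(w) of an X-ranker r (meaningful for r \<noteq> []) *)
definition rank_eval :: "'a list \<Rightarrow> 'a list \<Rightarrow> nat option" where
  "rank_eval r w = foldl (\<lambda>p a. Option.bind p (next_pos w a)) (Some 0) r"

definition xlen :: "'a list \<Rightarrow> nat \<Rightarrow> nat" where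
  "xlen u i = (LEAST k. \<exists>r. r \<noteq> [] \<and> rank_eval r u = Some i \<and> length r = k)"

definition Rset :: "'a list \<Rightarrow> nat \<Rightarrow> 'a list set" where
  "Rset u i = {r. r \<noteq> [] \<and> rank_eval r u = Some i \<and> length r = xlen u i}"

definition alg_step :: "('a \<Rightarrow> nat) \<times> ('a \<Rightarrow> nat set) \<Rightarrow> nat \<Rightarrow> 'a
                         \<Rightarrow> ('a \<Rightarrow> nat) \<times> ('a \<Rightarrow> nat set)" where
  "alg_step st i c =
     (let n1 = (fst st)(c := fst st c + 1);
          Q1 = (snd st)(c := {i});
          nc = n1 c; Qc = Q1 c
      in (\<lambda>a. if nc < n1 a then nc else n1 a,
          \<lambda>a. if nc < n1 a then Qc else if nc = n1 a then Q1 a \<union> Qc else Q1 a))"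

fun alg_state :: "'a list \<Rightarrow> nat \<Rightarrow> ('a \<Rightarrow> nat) \<times> ('a \<Rightarrow> nat set)" where
  "alg_state u 0 = (\<lambda>_. 1, \<lambda>_. {})"
| "alg_state u (Suc k) = alg_step (alg_state u k) (Suc k) (u ! k)"

definition Pset :: "'a list \<Rightarrow> nat \<Rightarrow> nat set" where
  "Pset u i = snd (alg_state u (i - 1)) (u ! (i - 1))"

end

theory Submission
  imports Defs
begin

fun lastpos :: "'a list \<Rightarrow> 'a \<Rightarrow> nat \<Rightarrow> nat" where
  "lastpos u a 0 = 0"
| "lastpos u a (Suc k) = (if u ! k = a then Suc k else lastpos u a k)"

lemma lastpos_le: "lastpos u a k \<le> k"
  by (induction k) auto

lemma lastpos_after: "lastpos u a k < j \<Longrightarrow> j \<le> k \<Longrightarrow> u ! (j - 1) \<noteq> a"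
proof (induction k)
  case 0 then show ?case by simp
next
  case (Suc k) then show ?case
    by (cases "j = Suc k") (auto split: if_splits)
qed

lemma lastpos_at: "lastpos u a k \<noteq> 0 \<Longrightarrow> u ! (lastpos u a k - 1) = a"
  by (induction k) auto

lemma next_pos_char:
  assumes "1 \<le> i" "i \<le> length u" "u ! (i - 1) = c"
  shows "next_pos u c j = Some i \<longleftrightarrow> lastpos u c (i - 1) \<le> j \<and> j < i"
proof
  assume h: "next_pos u c j = Some i"
  let ?P = "\<lambda>j'. j < j' \<and> j' \<le> length u \<and> u ! (j' - 1) = c"
  from h have ex: "\<exists>j'. ?P j'" and L: "(LEAST j'. ?P j') = i"
    unfolding next_pos_def by (auto split: if_splits)
  from LeastI_ex[OF ex] L have "j < i" by simp
  moreover have "lastpos u c (i - 1) \<le> j"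
  proof (rule ccontr)
    assume "\<not> ?thesis"
    hence "j < lastpos u c (i - 1)" by simp
    moreover have "lastpos u c (i - 1) \<le> i - 1" by (rule lastpos_le)
    moreover from calculation have "u ! (lastpos u c (i - 1) - 1) = c"
      using lastpos_at by (metis not_less_zero)
    moreover have "lastpos u c (i - 1) \<le> length u" using calculation assms by linarith
    ultimately have "?P (lastpos u c (i - 1))" by blast
    hence "(LEAST j'. ?P j') \<le> lastpos u c (i - 1)" by (rule Least_le)
    hence "i \<le> lastpos u c (i - 1)" using L by simp
    thus False using \<open>lastpos u c (i - 1) \<le> i - 1\<close> assms by simp
  qed
  ultimately show "lastpos u c (i - 1) \<le> j \<and> j < i" by simp
next
  assume h: "lastpos u c (i - 1) \<le> j \<and> j < i"
  let ?P = "\<lambda>j'. j < j' \<and> j' \<le> length u \<and> u ! (j' - 1) = c"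
  have Pi: "?P i" using h assms by simp
  have "(LEAST j'. ?P j') = i"
  proof (rule Least_equality)
    show "?P i" by (rule Pi)
    fix y assume "?P y"
    show "i \<le> y"
    proof (rule ccontr)
      assume "\<not> i \<le> y"
      hence "lastpos u c (i - 1) < y" "y \<le> i - 1" using h \<open>?P y\<close> by auto
      from lastpos_after[OF this] \<open>?P y\<close> show False by simp
    qed
  qed
  thus "next_pos u c j = Some i" unfolding next_pos_def using Pi by auto
qed

lemma next_pos_SomeD:
  assumes "next_pos u c j = Some i"
  shows "j < i \<and> i \<le> length u \<and> u ! (i - 1) = c"
proof -
  let ?P = "\<lambda>j'. j < j' \<and> j' \<le> length u \<and> u ! (j' - 1) = c"
  from assms have ex: "\<exists>j'. ?P j'" and L: "(LEAST j'. ?P j') = i"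
    unfolding next_pos_def by (auto split: if_splits)
  from LeastI_ex[OF ex] L show ?thesis by simp
qed

lemma rank_eval_Nil[simp]: "rank_eval [] u = Some 0"
  by (simp add: rank_eval_def)

lemma rank_eval_snoc: "rank_eval (s @ [a]) u = Option.bind (rank_eval s u) (next_pos u a)"
  by (simp add: rank_eval_def)

lemma rank_eval_snoc_Some:
  "rank_eval (s @ [a]) u = Some i \<longleftrightarrow> (\<exists>j. rank_eval s u = Some j \<and> next_pos u a j = Some i)"
  by (cases "rank_eval s u") (auto simp: rank_eval_snoc)

lemma rank_eval_zero: "rank_eval r u = Some 0 \<Longrightarrow> r = []"
proof (induction r rule: rev_induct)
  case (snoc a s)
  then obtain j where "next_pos u a j = Some 0" by (auto simp: rank_eval_snoc_Some)
  from next_pos_SomeD[OF this] show ?case by simp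
qed simp

lemma reachable: "j \<le> length u \<Longrightarrow> \<exists>r. rank_eval r u = Some j"
proof (induction j)
  case 0 show ?case by (rule exI[of _ "[]"]) simp
next
  case (Suc j)
  then obtain r where r: "rank_eval r u = Some j" by auto
  have "next_pos u (u ! j) j = Some (Suc j)"
    using next_pos_char[of "Suc j" u "u ! j" j] Suc.prems lastpos_le[of u "u!j" j] by simp
  with r show ?case by (intro exI[of _ "r @ [u ! j]"]) (simp add: rank_eval_snoc_Some)
qed


definition xx :: "'a list \<Rightarrow> nat \<Rightarrow> nat" where
  "xx u j = (LEAST k. \<exists>r. rank_eval r u = Some j \<and> length r = k)"

definition RR :: "'a list \<Rightarrow> nat \<Rightarrow> 'a list set" where
  "RR u j = {r. rank_eval r u = Some j \<and> length r = xx u j}"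

lemma xx_wit: assumes "j \<le> length u" shows "\<exists>r. rank_eval r u = Some j \<and> length r = xx u j"
proof -
  from reachable[OF assms] obtain r where "rank_eval r u = Some j" by auto
  hence "\<exists>k r. rank_eval r u = Some j \<and> length r = k" by auto
  from LeastI_ex[OF this] show ?thesis unfolding xx_def .
qed

lemma xx_le: "rank_eval r u = Some j \<Longrightarrow> xx u j \<le> length r"
  unfolding xx_def by (rule Least_le) auto

lemma xx_0[simp]: "xx u 0 = 0"
  using xx_le[of "[]" u 0] by simp

lemma RR_0: "RR u 0 = {[]}"
  by (auto simp: RR_def dest: rank_eval_zero)

lemma xx_pos: assumes "1 \<le> j" "j \<le> length u" shows "1 \<le> xx u j"
proof (rule ccontr)
  assume "\<not> ?thesis"
  from xx_wit[OF assms(2)] obtain r where "rank_eval r u = Some j" "length r = xx u j" by auto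
  with \<open>\<not> 1 \<le> xx u j\<close> have "length r = 0" by linarith
  hence "r = []" by simp
  with \<open>rank_eval r u = Some j\<close> assms show False by simp
qed

lemma xlen_xx: assumes "1 \<le> j" shows "xlen u j = xx u j"
proof -
  have "\<And>r. rank_eval r u = Some j \<Longrightarrow> r \<noteq> []" using assms by auto
  hence "(\<lambda>k. \<exists>r. r \<noteq> [] \<and> rank_eval r u = Some j \<and> length r = k) = (\<lambda>k. \<exists>r. rank_eval r u = Some j \<and> length r = k)"
    by blast
  thus ?thesis unfolding xlen_def xx_def by simp
qed

lemma Rset_RR: assumes "1 \<le> j" shows "Rset u j = RR u j"
  using xlen_xx[OF assms, of u] assms unfolding Rset_def RR_def by auto

lemma char_a:
  assumes "1 \<le> i" "i \<le> length u" "u ! (i - 1) = c"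
  shows "(\<forall>j\<in>{lastpos u c (i - 1)..<i}. xx u i \<le> xx u j + 1) \<and> (\<exists>j\<in>{lastpos u c (i - 1)..<i}. xx u i = xx u j + 1)"
proof
  show "\<forall>j\<in>{lastpos u c (i - 1)..<i}. xx u i \<le> xx u j + 1"
  proof
    fix j assume j: "j \<in> {lastpos u c (i - 1)..<i}"
    hence "j \<le> length u" using assms by simp
    from xx_wit[OF this] obtain s where s: "rank_eval s u = Some j" "length s = xx u j" by auto
    have "next_pos u c j = Some i" using next_pos_char[OF assms] j by simp
    with s have "rank_eval (s @ [c]) u = Some i" by (simp add: rank_eval_snoc_Some)
    from xx_le[OF this] s show "xx u i \<le> xx u j + 1" by simp
  qed
  then show "\<exists>j\<in>{lastpos u c (i - 1)..<i}. xx u i = xx u j + 1"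
  proof -
    assume all: "\<forall>j\<in>{lastpos u c (i - 1)..<i}. xx u i \<le> xx u j + 1"
    from xx_wit[OF assms(2)] obtain r where r: "rank_eval r u = Some i" "length r = xx u i" by auto
    have "r \<noteq> []" using r assms by auto
    then obtain s a where ra: "r = s @ [a]" by (metis rev_exhaust)
    with r obtain j where j: "rank_eval s u = Some j" "next_pos u a j = Some i"
      by (auto simp: rank_eval_snoc_Some)
    from next_pos_SomeD[OF j(2)] assms have "a = c" by simp
    with j(2) next_pos_char[OF assms] have jI: "j \<in> {lastpos u c (i - 1)..<i}" by simp
    have "xx u j \<le> length s" by (rule xx_le[OF j(1)])
    with r ra all jI show ?thesis by force
  qed
qed

lemma char_b:
  assumes "1 \<le> i" "i \<le> length u" "u ! (i - 1) = c"
  shows "RR u i = (\<Union>j\<in>{j\<in>{lastpos u c (i - 1)..<i}. xx u i = xx u j + 1}. (\<lambda>r. r @ [c]) ` RR u j)"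
proof (intro equalityI subsetI)
  fix r assume "r \<in> RR u i"
  hence r: "rank_eval r u = Some i" "length r = xx u i" by (auto simp: RR_def)
  have "r \<noteq> []" using r assms by auto
  then obtain s a where ra: "r = s @ [a]" by (metis rev_exhaust)
  with r obtain j where j: "rank_eval s u = Some j" "next_pos u a j = Some i"
    by (auto simp: rank_eval_snoc_Some)
  from next_pos_SomeD[OF j(2)] assms have "a = c" by simp
  with j(2) next_pos_char[OF assms] have jI: "j \<in> {lastpos u c (i - 1)..<i}" by simp
  have "xx u j \<le> length s" by (rule xx_le[OF j(1)])
  with r ra jI char_a[OF assms] have "length s = xx u j" "xx u i = xx u j + 1" by force+
  with j jI ra \<open>a = c\<close> show "r \<in> (\<Union>j\<in>{j\<in>{lastpos u c (i - 1)..<i}. xx u i = xx u j + 1}. (\<lambda>r. r @ [c]) ` RR u j)"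
    by (auto simp: RR_def)
next
  fix r assume "r \<in> (\<Union>j\<in>{j\<in>{lastpos u c (i - 1)..<i}. xx u i = xx u j + 1}. (\<lambda>r. r @ [c]) ` RR u j)"
  then obtain j s where jI: "j \<in> {lastpos u c (i - 1)..<i}" "xx u i = xx u j + 1" and s: "s \<in> RR u j" and rs: "r = s @ [c]"
    by auto
  have "next_pos u c j = Some i" using next_pos_char[OF assms] jI by simp
  with s rs jI show "r \<in> RR u i" by (auto simp: RR_def rank_eval_snoc_Some)
qed


definition INV :: "'a list \<Rightarrow> nat \<Rightarrow> ('a \<Rightarrow> nat) \<Rightarrow> ('a \<Rightarrow> nat set) \<Rightarrow> bool" where
  "INV u k n Q = (\<forall>a. (\<forall>j\<in>{lastpos u a k..k}. n a \<le> xx u j + 1) \<and> (\<exists>j\<in>{lastpos u a k..k}. n a = xx u j + 1)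
      \<and> Q a = {j\<in>{lastpos u a k..k}. 1 \<le> j \<and> n a = xx u j + 1})"

lemma inv_step:
  assumes inv: "INV u k n Q" and k: "Suc k \<le> length u"
  shows "INV u (Suc k) (fst (alg_step (n, Q) (Suc k) (u ! k))) (snd (alg_step (n, Q) (Suc k) (u ! k)))"
proof -
  define c where "c = u ! k"
  have ca: "(\<forall>j\<in>{lastpos u c k..<Suc k}. xx u (Suc k) \<le> xx u j + 1) \<and> (\<exists>j\<in>{lastpos u c k..<Suc k}. xx u (Suc k) = xx u j + 1)"
    using char_a[of "Suc k" u c] k c_def by simp
  have Ic: "{lastpos u c k..<Suc k} = {lastpos u c k..k}" by auto
  from inv have ic: "(\<forall>j\<in>{lastpos u c k..k}. n c \<le> xx u j + 1) \<and> (\<exists>j\<in>{lastpos u c k..k}. n c = xx u j + 1)"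
    unfolding INV_def by blast
  have xk: "xx u (Suc k) = n c"
  proof -
    from ca Ic ic have "xx u (Suc k) \<le> n c" by force
    moreover from ca Ic ic have "n c \<le> xx u (Suc k)" by force
    ultimately show ?thesis by simp
  qed
  have lp: "lastpos u a (Suc k) = (if a = c then Suc k else lastpos u a k)" for a
    using c_def by auto
  have lpk: "lastpos u a k \<le> k" for a by (rule lastpos_le)
  show ?thesis unfolding INV_def
  proof (intro allI)
    fix a
    show "(\<forall>j\<in>{lastpos u a (Suc k)..Suc k}. fst (alg_step (n, Q) (Suc k) (u ! k)) a \<le> xx u j + 1) \<and>
          (\<exists>j\<in>{lastpos u a (Suc k)..Suc k}. fst (alg_step (n, Q) (Suc k) (u ! k)) a = xx u j + 1) \<and>
          snd (alg_step (n, Q) (Suc k) (u ! k)) a =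
          {j \<in> {lastpos u a (Suc k)..Suc k}. 1 \<le> j \<and> fst (alg_step (n, Q) (Suc k) (u ! k)) a = xx u j + 1}"
    proof (cases "a = c")
      case True
      have fc: "fst (alg_step (n, Q) (Suc k) (u ! k)) a = n c + 1"
        and sc: "snd (alg_step (n, Q) (Suc k) (u ! k)) a = {Suc k}"
        using True by (simp_all add: alg_step_def Let_def c_def[symmetric])
      have I: "{lastpos u a (Suc k)..Suc k} = {Suc k}" using lp[of a] True by simp
      show ?thesis unfolding fc sc I using xk by auto
    next
      case False
      have I: "{lastpos u a (Suc k)..Suc k} = insert (Suc k) {lastpos u a k..k}"
        using lp[of a] False lpk[of a] by auto
      from inv have ia1: "\<forall>j\<in>{lastpos u a k..k}. n a \<le> xx u j + 1"
        and ia2: "\<exists>j\<in>{lastpos u a k..k}. n a = xx u j + 1"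
        and ia3: "Q a = {j\<in>{lastpos u a k..k}. 1 \<le> j \<and> n a = xx u j + 1}"
        unfolding INV_def by blast+
      have fa: "fst (alg_step (n, Q) (Suc k) (u ! k)) a = (if n c + 1 < n a then n c + 1 else n a)"
        and sa: "snd (alg_step (n, Q) (Suc k) (u ! k)) a = (if n c + 1 < n a then {Suc k} else if n c + 1 = n a then Q a \<union> {Suc k} else Q a)"
        using False by (simp_all add: alg_step_def Let_def c_def[symmetric])
      show ?thesis
      proof (cases "n c + 1 < n a")
        case True
        have "{j \<in> insert (Suc k) {lastpos u a k..k}. 1 \<le> j \<and> n c + 1 = xx u j + 1} = {Suc k}"
          using ia1 True xk by fastforce
        then show ?thesis unfolding fa sa I using ia1 xk True by auto
      next
        case F2: False
        show ?thesis
        proof (cases "n c + 1 = n a")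
          case True
          have "{j \<in> insert (Suc k) {lastpos u a k..k}. 1 \<le> j \<and> n a = xx u j + 1} = Q a \<union> {Suc k}"
            unfolding ia3 using True xk by auto
          then show ?thesis unfolding fa sa I using ia1 ia2 xk True by auto
        next
          case False
          have "{j \<in> insert (Suc k) {lastpos u a k..k}. 1 \<le> j \<and> n a = xx u j + 1} = Q a"
            unfolding ia3 using False F2 xk by auto
          then show ?thesis unfolding fa sa I using ia1 ia2 xk F2 False by auto
        qed
      qed
    qed
  qed
qed

lemma inv_all: "k \<le> length u \<Longrightarrow> INV u k (fst (alg_state u k)) (snd (alg_state u k))"
proof (induction k)
  case 0
  show ?case by (auto simp: INV_def)
next
  case (Suc k)
  then have "INV u k (fst (alg_state u k)) (snd (alg_state u k))" by simp
  from inv_step[OF this Suc.prems] show ?case by simp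
qed


theorem proposition21:
  fixes u :: "'a::finite list" and i :: nat and c :: 'a
  assumes "1 \<le> i" and "i \<le> length u" and "u ! (i - 1) = c"
  shows "Rset u i =
           (if Pset u i = {} then {[c]}
            else (\<Union>j\<in>Pset u i. (\<lambda>r. r @ [c]) ` Rset u j))"
proof -
  define p where "p = lastpos u c (i - 1)"
  define n where "n = fst (alg_state u (i - 1))"
  define Q where "Q = snd (alg_state u (i - 1))"
  have inv: "INV u (i - 1) n Q" unfolding n_def Q_def using inv_all[of "i - 1" u] assms by simp
  from inv have i1: "\<forall>j\<in>{p..i-1}. n c \<le> xx u j + 1" and i2: "\<exists>j\<in>{p..i-1}. n c = xx u j + 1"
    and i3: "Q c = {j\<in>{p..i-1}. 1 \<le> j \<and> n c = xx u j + 1}"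
    unfolding INV_def p_def by blast+
  have S: "{p..<i} = {p..i-1}" using assms by auto
  from char_a[OF assms] have a1: "\<forall>j\<in>{p..i-1}. xx u i \<le> xx u j + 1" and a2: "\<exists>j\<in>{p..i-1}. xx u i = xx u j + 1"
    unfolding p_def[symmetric] S by blast+
  have xn: "xx u i = n c" using i1 i2 a1 a2 by force
  have P: "Pset u i = {j\<in>{p..i-1}. 1 \<le> j \<and> xx u i = xx u j + 1}"
    unfolding Pset_def Q_def[symmetric] using assms i3 xn by simp
  have R: "Rset u i = (\<Union>j\<in>{j\<in>{p..i-1}. xx u i = xx u j + 1}. (\<lambda>r. r @ [c]) ` RR u j)"
    using char_b[OF assms] Rset_RR[of i u] assms unfolding p_def[symmetric] S by simp
  have pos: "\<And>j. j \<in> {p..i-1} \<Longrightarrow> 1 \<le> j \<Longrightarrow> 1 \<le> xx u j"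
  proof -
    fix j assume "j \<in> {p..i-1}" "1 \<le> j"
    hence "j \<le> length u" using assms(2) by auto
    from xx_pos[OF \<open>1 \<le> j\<close> this] show "1 \<le> xx u j" .
  qed
  show ?thesis
  proof (cases "p = 0")
    case True
    have x1: "xx u i = 1" using a1 True xx_pos[OF assms(1,2)] by force
    have "{j\<in>{p..i-1}. xx u i = xx u j + 1} = {0}"
    proof (intro equalityI subsetI)
      fix j assume "j \<in> {j\<in>{p..i-1}. xx u i = xx u j + 1}"
      with pos[of j] x1 show "j \<in> {0}" by (cases "j = 0") auto
    qed (use x1 True in auto)
    hence R0: "Rset u i = {[c]}" using R RR_0[of u] by simp
    have "Pset u i = {}" unfolding P using pos x1 by force
    then show ?thesis using R0 by simp
  next
    case False
    have J: "{j\<in>{p..i-1}. xx u i = xx u j + 1} = Pset u i" unfolding P using False by auto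
    have ne: "Pset u i \<noteq> {}" using a2 J by auto
    have "Rset u i = (\<Union>j\<in>Pset u i. (\<lambda>r. r @ [c]) ` Rset u j)"
    proof -
      have "\<And>j. j \<in> Pset u i \<Longrightarrow> RR u j = Rset u j" using Rset_RR P by auto
      then show ?thesis unfolding R J by (intro SUP_cong refl) simp
    qed
    then show ?thesis using ne by simp
  qed
qed

end
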